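(* Let $p\ge 5$ be a prime and $m\in\mathbb{N}$. If there exist $u,v\in\mathbb{Z}$ with $\gcd(u,v)=1$ such that $$u+\delta_4 v=3^m\quad\text{and}\quad H_p(u,v)=1,$$ then $p\equiv 5$ or $11\pmod{24}$.
   Context: For an odd prime $p$ put $\delta_4=1$ if $p\equiv 1\pmod 4$, $\delta_4=-1$ if $p\equiv 3\pmod 4$. Let $G_p(u,v)=\mathrm{Im}\big((1+i)(u+iv)^p\big)\in\mathbb{Z}[u,v]$ (for real $u,v$); $u+\delta_4 v$ divides $G_p$ in $\mathbb{Z}[u,v]$, and $H_p(u,v):=G_p(u,v)/(u+\delta_4 v)\in\mathbb{Z}[u,v]$. $\mathbb{N}$ denotes the positive integers. *)

theory Defs
  imports Complex_Main "HOL-Computational_Algebra.Primes"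
begin

definition delta4 :: "nat \<Rightarrow> int" where
  "delta4 p = (if p mod 4 = 1 then 1 else -1)"

definition G :: "nat \<Rightarrow> int \<Rightarrow> int \<Rightarrow> real" where
  "G p u v = Im ((1 + \<i>) * (complex_of_int u + \<i> * complex_of_int v) ^ p)"

text \<open>H_p(u,v) = G_p(u,v) / (u + delta4 v); evaluation of the polynomial quotient,
  valid (exact) whenever u + delta4 v is nonzero.\<close>
definition H :: "nat \<Rightarrow> int \<Rightarrow> int \<Rightarrow> real" where
  "H p u v = G p u v / real_of_int (u + delta4 p * v)"

end

theory Submission
  imports Defs "HOL-Number_Theory.Number_Theory"
begin


fun wp :: "int \<Rightarrow> nat \<Rightarrow> int \<times> int" where
  "wp d 0 = (1, 0)"
| "wp d (Suc k) = (fst (wp d k) * (- d) - snd (wp d k), fst (wp d k) + snd (wp d k) * (- d))"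

definition ww :: "int \<Rightarrow> complex" where "ww d = Complex (- of_int d) 1"

lemma ww_pow: "ww d ^ k = Complex (of_int (fst (wp d k))) (of_int (snd (wp d k)))"
  by (induction k) (auto simp: ww_def complex_eq_iff algebra_simps)

definition cI :: "int \<Rightarrow> nat \<Rightarrow> int" where "cI d k = fst (wp d k) + snd (wp d k)"

lemma cI_Im: "Im ((1 + \<i>) * ww d ^ k) = of_int (cI d k)"
  by (simp add: ww_pow cI_def)

lemma Im_of_int_mult: "Im (complex_of_int n * z) = of_int n * Im z" by simp

lemma expand:
  fixes s v :: int and d :: int and p :: nat
  shows "Im ((1 + \<i>) * (of_int s + of_int v * ww d) ^ p) =
     (\<Sum>j\<le>p. of_int (int (p choose j) * s ^ j * v ^ (p - j) * cI d (p - j)))"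
proof -
  have "(1 + \<i>) * (of_int s + of_int v * ww d) ^ p =
     (\<Sum>j\<le>p. of_int (int (p choose j) * s ^ j * v ^ (p - j)) * ((1 + \<i>) * ww d ^ (p - j)))"
    by (simp add: binomial_ring sum_distrib_left power_mult_distrib algebra_simps)
  then show ?thesis by (simp only: Im_sum Im_of_int_mult cI_Im of_int_mult[symmetric])
qed


lemma decomp3: "n > (0::nat) \<Longrightarrow> \<exists>b q. n = 3^b * q \<and> \<not> 3 dvd q"
proof (induction n rule: less_induct)
  case (less n)
  show ?case
  proof (cases "3 dvd n")
    case True
    then obtain n' where n': "n = 3 * n'" by blast
    with less.prems have "n' < n" "n' > 0" by auto
    with less.IH obtain b q where "n' = 3^b*q" "\<not> 3 dvd q" by blast
    then show ?thesis using n' by (intro exI[of _ "Suc b"] exI[of _ q]) auto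
  next
    case False
    then show ?thesis by (intro exI[of _ 0] exI[of _ n]) auto
  qed
qed

lemma pow3_ge1: "b + 1 \<le> (3::nat)^b"
  by (induction b) auto

lemma pow3_ge2: "b \<ge> 1 \<Longrightarrow> b + 2 \<le> (3::nat)^b"
proof (induction b)
  case 0 then show ?case by simp
next
  case (Suc b) then show ?case by (cases "b = 0") auto
qed

lemma choose_eq2: "j \<ge> 2 \<Longrightarrow> p \<ge> 2 \<Longrightarrow> j * (j - 1) * (p choose j) = p * (p - 1) * ((p - 2) choose (j - 2))"
proof -
  assume "j \<ge> 2" "p \<ge> 2"
  then obtain j' p' where j: "j = Suc (Suc j')" and p: "p = Suc (Suc p')"
    by (metis add_2_eq_Suc le_Suc_ex)
  have 1: "Suc (Suc p') * (Suc p' choose Suc j') = (Suc (Suc p') choose Suc (Suc j')) * Suc (Suc j')"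
    by (rule Suc_times_binomial_eq)
  have 2: "Suc p' * (p' choose j') = (Suc p' choose Suc j') * Suc j'"
    by (rule Suc_times_binomial_eq)
  have "Suc (Suc j') * Suc j' * (Suc (Suc p') choose Suc (Suc j')) = Suc j' * (Suc (Suc p') * (Suc p' choose Suc j'))"
    using 1 by (simp add: algebra_simps)
  also have "\<dots> = Suc (Suc p') * ((Suc p' choose Suc j') * Suc j')" by (simp add: algebra_simps)
  also have "\<dots> = Suc (Suc p') * (Suc p' * (p' choose j'))" using 2 by simp
  finally show ?thesis using j p by (simp add: algebra_simps)
qed

lemma comb_dvd:
  assumes "(3::nat)^a dvd (p - 1)" "2 \<le> j" "j \<le> p"
  shows "(3::nat)^(a+1) dvd (p choose j) * 3^(j-1)"
proof -
  have "p \<ge> 2" using assms by simp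
  have h: "3^a dvd j * (j - 1) * (p choose j)"
    using choose_eq2[OF assms(2) \<open>p \<ge> 2\<close>] assms(1) by (metis dvd_mult dvd_mult2)
  obtain b1 q1 where j1: "j = 3^b1 * q1" "\<not> 3 dvd q1" using decomp3[of j] assms by auto
  obtain b2 q2 where j2: "j - 1 = 3^b2 * q2" "\<not> 3 dvd q2" using decomp3[of "j-1"] assms by auto
  have "j * (j - 1) * (p choose j) = (q1 * q2) * (3^(b1+b2) * (p choose j))"
    using j1 j2 by (simp add: power_add algebra_simps)
  moreover have "coprime ((3::nat)^a) (q1 * q2)"
  proof -
    have p3: "prime (3::nat)" by simp
    have "coprime (3::nat) q1" "coprime (3::nat) q2" using j1 j2 prime_imp_coprime[OF p3] by auto
    then show ?thesis by simp
  qed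
  ultimately have "3^a dvd 3^(b1+b2) * (p choose j)"
    using h by (metis coprime_dvd_mult_right_iff)
  hence "3 * 3^a dvd 3 * (3^(b1+b2) * (p choose j))" by (rule mult_dvd_mono[OF dvd_refl])
  hence A: "3^(a+1) dvd 3^(b1+b2+1) * (p choose j)" by (simp add: algebra_simps)
  have q1: "q1 > 0" using j1 assms by (cases "q1 = 0") auto
  have q2: "q2 > 0" using j2 assms by (cases "q2 = 0") auto
  have le1: "3^b1 \<le> j" using q1 j1(1) by simp
  have le2: "3^b2 \<le> j - 1" using q2 j2(1) by simp
  have "b1 + b2 + 1 \<le> j - 1"
  proof (cases "b1 = 0")
    case True
    then show ?thesis using pow3_ge1[of b2] le2 by simp
  next
    case False
    have "3 dvd (3::nat)^b1" using False by (simp add: dvd_power)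
    hence d1: "3 dvd j" using j1(1) by simp
    have "b2 = 0"
    proof (rule ccontr)
      assume "b2 \<noteq> 0"
      have "3 dvd (3::nat)^b2" using \<open>b2 \<noteq> 0\<close> by (simp add: dvd_power)
      hence "3 dvd j - 1" using j2(1) by simp
      hence "3 dvd j - (j - 1)" using d1 by (rule dvd_diff_nat[rotated])
      moreover have "j - (j - 1) = 1" using assms by simp
      ultimately show False by simp
    qed
    then show ?thesis using pow3_ge2[of b1] False le1 by simp
  qed
  hence "(3::nat)^(b1+b2+1) dvd 3^(j-1)" by (rule le_imp_power_dvd)
  then show ?thesis using A by (metis dvd_trans mult.commute mult_dvd_mono dvd_refl)
qed



lemma E0: "\<not> (3::int) dvd x \<Longrightarrow> (3::int)^(a+1) dvd x^(2*3^a) - 1"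
proof (induction a)
  case 0
  have "x mod 3 = 1 \<or> x mod 3 = 2" using 0 by presburger
  hence "[x^2 = 1] (mod 3)"
  proof
    assume "x mod 3 = 1" hence "[x = 1] (mod 3)" by (simp add: cong_def)
    thus ?thesis using cong_pow by fastforce
  next
    assume "x mod 3 = 2" hence "[x = 2] (mod 3)" by (simp add: cong_def)
    hence "[x^2 = 2^2] (mod 3)" using cong_pow by blast
    thus ?thesis by (simp add: cong_def)
  qed
  then show ?case by (simp add: cong_iff_dvd_diff)
next
  case (Suc a)
  then obtain t where t: "x^(2*3^a) - 1 = 3^(a+1) * t" by (meson dvdE)
  define y where "y = x^(2*3^a)"
  have y: "y = 1 + 3^(a+1) * t" using t y_def by simp
  have "x^(2*3^(Suc a)) = y^3" by (simp add: y_def power_mult[symmetric] algebra_simps)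
  also have "y^3 - 1 = 3^(a+2) * (t + 3^(a+1)*t^2 + 3^(2*a+1)*t^3)"
    unfolding y by (simp add: power2_eq_square power3_eq_cube power_add power_mult algebra_simps)
  finally show ?case by simp
qed

lemma E: "\<not> (3::int) dvd x \<Longrightarrow> 2*3^a dvd n \<Longrightarrow> (3::int)^(a+1) dvd x^n - 1"
proof -
  assume h: "\<not> (3::int) dvd x" "2*3^a dvd n"
  then obtain q where q: "n = 2*3^a*q" by blast
  have "[x^(2*3^a) = 1] (mod 3^(a+1))" using E0[OF h(1)] by (simp add: cong_iff_dvd_diff)
  hence "[(x^(2*3^a))^q = 1^q] (mod 3^(a+1))" by (rule cong_pow)
  hence "[x^n = 1] (mod 3^(a+1))" by (simp add: q power_mult)
  thus ?thesis by (simp add: cong_iff_dvd_diff)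
qed

lemma wp2: "d * d = 1 \<Longrightarrow> wp d (Suc (Suc n)) = (2*d*snd (wp d n), -2*d*fst (wp d n))"
  by (simp add: algebra_simps)

lemma wp8: "d * d = 1 \<Longrightarrow> wp d (n + 8) = (16 * fst (wp d n), 16 * snd (wp d n))"
proof -
  assume "d*d = 1"
  have "n + 8 = Suc (Suc (Suc (Suc (Suc (Suc (Suc (Suc n)))))))" by simp
  then show ?thesis using \<open>d*d=1\<close> by (simp only: wp2) (simp add: algebra_simps)
qed

lemma cI8: "d * d = 1 \<Longrightarrow> cI d (8*q + r) = 16^q * cI d r"
proof (induction q)
  case 0 then show ?case by simp
next
  case (Suc q)
  have "8 * Suc q + r = (8*q + r) + 8" by simp
  then show ?case using Suc by (simp only: cI_def wp8) (simp add: algebra_simps)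
qed

lemma cI_small:
  "cI 1 0 = 1" "cI 1 1 = 0" "cI 1 4 = -4" "cI 1 5 = 0"
  "cI (-1) 2 = 2" "cI (-1) 3 = 0" "cI (-1) 6 = -8" "cI (-1) 7 = 0"
  by (simp_all add: cI_def numeral_eq_Suc)



lemma key:
  fixes p m a :: nat and u v :: int
  assumes dd: "delta4 p * delta4 p = 1" and m: "m \<ge> 1" and p2: "p \<ge> 2" and a: "3^a dvd (p-1)"
    and c0: "cI (delta4 p) p = 0" and uv: "u + delta4 p * v = 3^m" and H1: "H p u v = 1"
  shows "(3::int)^(a+1) dvd int p * v^(p-1) * cI (delta4 p) (p-1) - 1"
proof -
  define d where "d = delta4 p"
  define s :: int where "s = 3^m"
  have u: "u = s - d * v" using uv unfolding d_def s_def by simp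
  have z: "complex_of_int u + \<i> * complex_of_int v = of_int s + of_int v * ww d"
    unfolding u by (simp add: complex_eq_iff ww_def)
  define f where "f j = int (p choose j) * s ^ j * v ^ (p - j) * cI d (p - j)" for j
  have G: "G p u v = of_int (\<Sum>j\<le>p. f j)"
    unfolding G_def z expand f_def by simp
  obtain p' where p': "p = Suc p'" using p2 by (cases p) auto
  define g where "g i = int (p choose Suc i) * s ^ i * v ^ (p - Suc i) * cI d (p - Suc i)" for i
  have "(\<Sum>j\<le>p. f j) = f 0 + (\<Sum>i\<le>p'. f (Suc i))" unfolding p' by (rule sum.atMost_Suc_shift)
  also have "f 0 = 0" using c0 by (simp add: f_def d_def)
  also have "(\<Sum>i\<le>p'. f (Suc i)) = s * (\<Sum>i\<le>p'. g i)"
    by (simp add: sum_distrib_left f_def g_def algebra_simps)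
  finally have GI: "(\<Sum>j\<le>p. f j) = s * (\<Sum>i\<le>p'. g i)" by simp
  have "H p u v = of_int (\<Sum>i\<le>p'. g i)"
    unfolding H_def G GI using uv by (simp add: d_def s_def)
  hence sg: "(\<Sum>i\<le>p'. g i) = 1" using H1 by (metis of_int_eq_1_iff)
  obtain p'' where p'': "p' = Suc p''" using p2 p' by (cases p') auto
  have "(\<Sum>i\<le>p'. g i) = g 0 + (\<Sum>i\<le>p''. g (Suc i))" unfolding p'' by (rule sum.atMost_Suc_shift)
  hence eq: "g 0 - 1 = - (\<Sum>i\<le>p''. g (Suc i))" using sg by simp
  have "(3::int)^(a+1) dvd (\<Sum>i\<le>p''. g (Suc i))"
  proof (rule dvd_sum)
    fix i assume i: "i \<in> {..p''}"
    have "(3::nat)^(a+1) dvd (p choose (i+2)) * 3^(i+2-1)"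
      by (rule comb_dvd[OF a]) (use i p' p'' in auto)
    moreover have "i+2-1 = i+1" by simp
    ultimately have "(3::nat)^(a+1) dvd (p choose (i+2)) * 3^(i+1)" by metis
    hence "int ((3::nat)^(a+1)) dvd int ((p choose (i+2)) * 3^(i+1))" by (simp only: int_dvd_int_iff)
    hence h1: "(3::int)^(a+1) dvd int (p choose (i+2)) * 3^(i+1)" by (simp only: of_nat_mult of_nat_power of_nat_numeral)
    have "(3::int)^(i+1) dvd 3^(m*(i+1))" using m by (intro le_imp_power_dvd) (metis mult_le_mono1 mult_1 mult.commute)
    moreover have "(3::int)^(m*(i+1)) = s^(i+1)" by (simp only: s_def power_mult)
    ultimately have "(3::int)^(i+1) dvd s^(i+1)" by simp
    hence "int (p choose (i+2)) * 3^(i+1) dvd int (p choose (i+2)) * s^(i+1)" by (rule mult_dvd_mono[OF dvd_refl])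
    with h1 have "(3::int)^(a+1) dvd int (p choose (i+2)) * s^(i+1)" by (rule dvd_trans)
    hence "(3::int)^(a+1) dvd int (p choose (i+2)) * s^(i+1) * (v ^ (p - Suc (Suc i)) * cI d (p - Suc (Suc i)))"
      by (rule dvd_mult2)
    then show "(3::int)^(a+1) dvd g (Suc i)" unfolding g_def
      by (simp add: numeral_2_eq_2 mult.assoc)
  qed
  hence "(3::int)^(a+1) dvd g 0 - 1" using eq by simp
  moreover have "g 0 = int p * v^(p-1) * cI (delta4 p) (p-1)" by (simp add: g_def d_def)
  ultimately show ?thesis by simp
qed



lemma cI_facts:
  fixes p :: nat
  assumes "odd p" "p \<ge> 2"
  shows "cI (delta4 p) p = 0 \<and> (cI (delta4 p) (p-1))^2 = 2^(p-1) \<and>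
    (p mod 8 = 1 \<longrightarrow> [cI (delta4 p) (p-1) = 1] (mod 3)) \<and>
    (p mod 8 = 7 \<longrightarrow> [cI (delta4 p) (p-1) = 1] (mod 3))"
proof -
  obtain q where q: "p = 8 * q + p mod 8" by (metis div_mult_mod_eq mult.commute)
  have r: "p mod 8 = 1 \<or> p mod 8 = 3 \<or> p mod 8 = 5 \<or> p mod 8 = 7" using assms(1) by presburger
  have c16: "[(16::int)^q = 1] (mod 3)"
  proof -
    have "[(16::int) = 1] (mod 3)" by (simp add: cong_def)
    hence "[(16::int)^q = 1^q] (mod 3)" by (rule cong_pow)
    thus ?thesis by simp
  qed
  have p16: "(2::int)^(8*q) = 16^q * 16^q" by (simp add: power_mult power_mult_distrib[symmetric] flip: power_add) 
  from r show ?thesis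
  proof (elim disjE)
    assume h: "p mod 8 = 1"
    hence d: "delta4 p = 1" unfolding delta4_def by presburger
    have e1: "p = 8*q + 1" and e2: "p - 1 = 8*q + 0" using q h by simp_all
    have A: "cI 1 p = 0" using cI8[of 1 q 1] e1 by (simp add: cI_small cI_small[simplified])
    have B: "cI 1 (p-1) = 16^q" using cI8[of 1 q 0] e2 by (simp add: cI_small cI_small[simplified])
    show ?thesis unfolding d using A B c16 p16 e2 by (simp add: power2_eq_square)
  next
    assume h: "p mod 8 = 3"
    hence d: "delta4 p = -1" unfolding delta4_def by presburger
    have e1: "p = 8*q + 3" and e2: "p - 1 = 8*q + 2" using q h by simp_all
    have A: "cI (-1) p = 0" using cI8[of "-1" q 3] e1 by (simp add: cI_small cI_small[simplified])
    have B: "cI (-1) (p-1) = 16^q * 2" using cI8[of "-1" q 2] e2 by (simp add: cI_small cI_small[simplified])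
    show ?thesis unfolding d using A B p16 e2 h by (simp add: power2_eq_square power_add)
  next
    assume h: "p mod 8 = 5"
    hence d: "delta4 p = 1" unfolding delta4_def by presburger
    have e1: "p = 8*q + 5" and e2: "p - 1 = 8*q + 4" using q h by simp_all
    have A: "cI 1 p = 0" using cI8[of 1 q 5] e1 by (simp add: cI_small cI_small[simplified])
    have B: "cI 1 (p-1) = 16^q * -4" using cI8[of 1 q 4] e2 by (simp add: cI_small cI_small[simplified])
    show ?thesis unfolding d using A B p16 e2 h by (simp add: power2_eq_square power_add)
  next
    assume h: "p mod 8 = 7"
    hence d: "delta4 p = -1" unfolding delta4_def by presburger
    have e1: "p = 8*q + 7" and e2: "p - 1 = 8*q + 6" using q h by simp_all
    have "[-8 * (16::int)^q = -8 * 1] (mod 3)" using c16 by (rule cong_mult[OF cong_refl])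
    hence "[-8 * (16::int)^q = 1] (mod 3)" by (simp add: cong_def)
    have A: "cI (-1) p = 0" using cI8[of "-1" q 7] e1 by (simp add: cI_small cI_small[simplified])
    have B: "cI (-1) (p-1) = 16^q * -8" using cI8[of "-1" q 6] e2 by (simp add: cI_small cI_small[simplified])
    show ?thesis unfolding d using A B p16 e2 h \<open>[-8 * (16::int)^q = 1] (mod 3)\<close> by (simp add: power2_eq_square power_add mult.commute)
  qed
qed



lemma fin: assumes "a \<ge> 1" "\<not> 3 dvd (r::nat)" shows "\<not> (3::int) dvd int r * (3^a * int r + 2)"
proof
  assume h0: "(3::int) dvd int r * (3^a * int r + 2)"
  have p3: "prime (3::int)" by simp
  have "(3::int) dvd int r \<or> (3::int) dvd 3^a * int r + 2" using prime_dvd_mult_iff[OF p3] h0 by blast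
  thus False
  proof
    assume "(3::int) dvd int r" hence "3 dvd r" by (metis of_nat_numeral int_dvd_int_iff)
    thus False using assms(2) by blast
  next
    assume h: "(3::int) dvd 3^a * int r + 2"
    obtain a' where a: "a = Suc a'" using assms(1) by (cases a) auto
    have e: "(3::int)^a * int r = 3 * (3^a' * int r)" unfolding a by (simp only: power_Suc mult.assoc)
    have "(3::int) dvd 3^a * int r" unfolding e by (rule dvd_triv_left)
    hence "(3::int) dvd (3^a * int r + 2) - 3^a * int r" by (rule dvd_diff[OF h])
    hence "(3::int) dvd 2" by simp
    thus False by simp
  qed
qed

lemma crt24: "(p::nat) mod 3 = 2 \<Longrightarrow> odd p \<Longrightarrow> p mod 24 \<noteq> 5 \<Longrightarrow> p mod 24 \<noteq> 11 \<Longrightarrow> p mod 8 = 1 \<or> p mod 8 = 7"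
proof -
  assume a: "p mod 3 = 2" "odd p" "p mod 24 \<noteq> 5" "p mod 24 \<noteq> 11"
  have o: "p mod 8 = 1 \<or> p mod 8 = 3 \<or> p mod 8 = 5 \<or> p mod 8 = 7" using a(2) by presburger
  have c3: "coprime (8::nat) 3"
  proof -
    have "coprime (3::nat) 8" by (rule prime_imp_coprime) auto
    thus ?thesis by (simp add: coprime_commute)
  qed
  have "p mod 8 \<noteq> 3"
  proof
    assume "p mod 8 = 3"
    hence "[p = 11] (mod 8)" "[p = 11] (mod 3)" using a(1) by (simp_all add: cong_def)
    hence "[p = 11] (mod 8 * 3)" using c3 by (intro coprime_cong_mult_nat)
    thus False using a(4) by (simp add: cong_def)
  qed
  moreover have "p mod 8 \<noteq> 5"
  proof
    assume "p mod 8 = 5"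
    hence "[p = 5] (mod 8)" "[p = 5] (mod 3)" using a(1) by (simp_all add: cong_def)
    hence "[p = 5] (mod 8 * 3)" using c3 by (intro coprime_cong_mult_nat)
    thus False using a(3) by (simp add: cong_def)
  qed
  ultimately show ?thesis using o by blast
qed

theorem lemma9:
  fixes p m :: nat and u v :: int
  assumes "prime p" and "p \<ge> 5" and "m \<ge> 1"
    and "gcd u v = 1"
    and "u + delta4 p * v = 3 ^ m"
    and "H p u v = 1"
  shows "p mod 24 = 5 \<or> p mod 24 = 11"
proof -
  have dd: "delta4 p * delta4 p = 1" by (simp add: delta4_def)
  have oddp: "odd p" using prime_odd_nat[OF assms(1)] assms(2) by simp
  have n3: "\<not> 3 dvd p"
  proof
    assume "3 dvd p"
    hence "p = 3" using assms(1) unfolding prime_nat_iff by force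
    thus False using assms(2) by simp
  qed
  have p2: "p \<ge> 2" using assms(2) by simp
  note cf = cI_facts[OF oddp p2]
  define c where "c = cI (delta4 p) (p-1)"
  have v3: "\<not> (3::int) dvd v"
  proof
    assume "(3::int) dvd v"
    moreover have "(3::int) dvd 3^m" using assms(3) by (simp add: dvd_power)
    moreover have "u = 3^m - delta4 p * v" using assms(5) by simp
    ultimately have "(3::int) dvd u" by simp
    hence "(3::int) dvd gcd u v" using \<open>3 dvd v\<close> by simp
    thus False using assms(4) by simp
  qed
  have ev: "even (p - 1)" using oddp by simp
  have "p mod 3 = 1 \<or> p mod 3 = 2" using n3 by presburger
  thus ?thesis
  proof
    assume h3: "p mod 3 = 2"
    have k: "(3::int)^(0+1) dvd int p * v^(p-1) * c - 1"
      unfolding c_def by (rule key[OF dd assms(3) p2 _ _ assms(5,6)]) (use cf in auto)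
    have V: "(3::int)^(0+1) dvd v^(p-1) - 1" by (rule E[OF v3]) (use ev in simp)
    show ?thesis
    proof (rule ccontr)
      assume "\<not> ?thesis"
      hence "p mod 8 = 1 \<or> p mod 8 = 7" using crt24[OF h3 oddp] by blast
      hence C: "[c = 1] (mod 3)" using cf unfolding c_def by auto
      have P: "[int p = 2] (mod 3)" using h3 by (simp add: cong_def) presburger
      have "[v^(p-1) = 1] (mod 3)" using V by (simp add: cong_iff_dvd_diff)
      hence A: "[int p * v^(p-1) * c = 2 * 1 * 1] (mod 3)" using P C by (intro cong_mult)
      have B: "[int p * v^(p-1) * c = 1] (mod 3)" using k by (simp add: cong_iff_dvd_diff)
      have "[2 * 1 * 1 = (1::int)] (mod 3)" by (rule cong_trans[OF cong_sym[OF A] B])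
      thus False by (simp add: cong_def)
    qed
  next
    assume h3: "p mod 3 = 1"
    have "p - 1 > 0" using p2 by simp
    then obtain a r where ar: "p - 1 = 3^a * r" "\<not> 3 dvd r" using decomp3 by blast
    have a1: "a \<ge> 1"
    proof (rule ccontr)
      assume "\<not> a \<ge> 1" hence "a = 0" by simp
      hence "r = p - 1" using ar by simp
      moreover have "3 dvd p - 1" using h3 by presburger
      ultimately show False using ar by simp
    qed
    have k: "(3::int)^(a+1) dvd int p * v^(p-1) * c - 1"
      unfolding c_def by (rule key[OF dd assms(3) p2 _ _ assms(5,6)]) (use cf ar in auto)
    have "even (3^a * r)" by (subst ar(1)[symmetric]) (rule ev)
    hence r2: "even r" by simp
    have d23: "2 * 3^a dvd p - 1" using r2 ar by auto
    have V: "(3::int)^(a+1) dvd v^(p-1) - 1" by (rule E[OF v3 d23])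
    have T: "(3::int)^(a+1) dvd 2^(p-1) - 1" by (rule E[OF _ d23]) simp
    define M :: int where "M = 3^(a+1)"
    have c2: "[c^2 = 1] (mod M)" using T cf unfolding M_def c_def by (simp add: cong_iff_dvd_diff)
    have Vc: "[v^(p-1) = 1] (mod M)" using V unfolding M_def by (simp add: cong_iff_dvd_diff)
    have kc: "[int p * v^(p-1) * c = 1] (mod M)" using k unfolding M_def by (simp add: cong_iff_dvd_diff)
    have "[int p * v^(p-1) * c = int p * 1 * c] (mod M)" using Vc by (intro cong_mult cong_refl)
    hence "[int p * 1 * c = 1] (mod M)" by (rule cong_trans[OF cong_sym kc])
    hence "[int p * c = 1] (mod M)" by simp
    hence "[(int p * c)^2 = 1^2] (mod M)" by (rule cong_pow)
    hence X: "[int p ^2 * c^2 = 1] (mod M)" by (simp add: power_mult_distrib)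
    have Y: "[int p ^2 * c^2 = int p^2 * 1] (mod M)" using c2 by (intro cong_mult cong_refl)
    have "[int p^2 * 1 = 1] (mod M)" by (rule cong_trans[OF cong_sym[OF Y] X])
    hence "[int p^2 = 1] (mod M)" by simp
    hence "M dvd int p^2 - 1" by (simp add: cong_iff_dvd_diff)
    moreover have "int p ^2 - 1 = 3^a * (int r * (3^a * int r + 2))"
    proof -
      have "p = 3^a * r + 1" using ar p2 by simp
      hence "int p = int (3^a * r) + 1" by simp
      hence "int p = 3^a * int r + 1" by simp
      thus ?thesis by (simp add: power2_eq_square algebra_simps)
    qed
    ultimately have "M dvd (3::int)^a * (int r * (3^a * int r + 2))" by metis
    moreover have "M = 3^a * 3" unfolding M_def by (rule power_Suc2[unfolded Suc_eq_plus1])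
    ultimately have "(3::int)^a * 3 dvd 3^a * (int r * (3^a * int r + 2))" by metis
    hence "(3::int) dvd int r * (3^a * int r + 2)" by (simp only: dvd_mult_cancel_left) simp
    hence False using fin[OF a1 ar(2)] by blast
    thus ?thesis by simp
  qed
qed

end
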